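(* Let $T^+=\mathbb{Z}^+$ or $\mathbb{R}^+$ act on a compact metrizable space $X$ by continuous surjections $\alpha^t$. Then the adherence semigroup $\mathcal A^+$ contains the kernel $\mathcal M^+$ of $E^+$.
   Context: $\alpha^{s+t}=\alpha^s\circ\alpha^t$, $\alpha^0=\mathrm{id}$. $E^+=E(X,T^+)$ is the closure of $\{\alpha^t:t\in T^+\}$ in $X^X$ (pointwise convergence topology, composition); its kernel $\mathcal M^+$ is its unique minimal two-sided ideal. $\mathcal A^+$ is the set of elements of $E^+$ that are pointwise limits of nets $(\alpha^{t_\nu})$ with $\lim t_\nu=+\infty$ (equivalently $\bigcap_{t\in T^+}\alpha^tE^+$). *)

theory Defs
  imports "HOL-Analysis.Analysis"
begin

text \<open>Maps X \<rightarrow> X are represented extensionally (value undefined outside X),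
  i.e. as elements of PiE X (\<lambda>_. X).  X^X carries the topology of pointwise
  convergence (product topology).\<close>

definition ptwise_top :: "'a::metric_space set \<Rightarrow> ('a \<Rightarrow> 'a) topology" where
  "ptwise_top X = product_topology (\<lambda>_. subtopology euclidean X) X"

definition ecomp :: "'a set \<Rightarrow> ('a \<Rightarrow> 'a) \<Rightarrow> ('a \<Rightarrow> 'a) \<Rightarrow> ('a \<Rightarrow> 'a)" where
  "ecomp X f g = restrict (f \<circ> g) X"

definition envelope :: "'a::metric_space set \<Rightarrow> real set \<Rightarrow> (real \<Rightarrow> 'a \<Rightarrow> 'a) \<Rightarrow> ('a \<Rightarrow> 'a) set" where
  "envelope X T \<alpha> = (ptwise_top X) closure_of ((\<lambda>t. restrict (\<alpha> t) X) ` T)"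

definition is_ideal :: "'a set \<Rightarrow> ('a \<Rightarrow> 'a) set \<Rightarrow> ('a \<Rightarrow> 'a) set \<Rightarrow> bool" where
  "is_ideal X S I \<longleftrightarrow> I \<subseteq> S \<and> I \<noteq> {} \<and>
     (\<forall>f\<in>S. \<forall>g\<in>I. ecomp X f g \<in> I \<and> ecomp X g f \<in> I)"

definition is_minimal_ideal :: "'a set \<Rightarrow> ('a \<Rightarrow> 'a) set \<Rightarrow> ('a \<Rightarrow> 'a) set \<Rightarrow> bool" where
  "is_minimal_ideal X S I \<longleftrightarrow> is_ideal X S I \<and> (\<forall>J. is_ideal X S J \<and> J \<subseteq> I \<longrightarrow> J = I)"

definition kernel :: "'a set \<Rightarrow> ('a \<Rightarrow> 'a) set \<Rightarrow> ('a \<Rightarrow> 'a) set" where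
  "kernel X S = (THE I. is_minimal_ideal X S I)"

text \<open>Adherence semigroup: elements of E^+ that are limits of nets (alpha^{t_nu})
  with t_nu \<rightarrow> +\<infinity>, i.e. every neighbourhood of f contains alpha^t for
  arbitrarily large t in T^+.\<close>
definition adherence :: "'a::metric_space set \<Rightarrow> real set \<Rightarrow> (real \<Rightarrow> 'a \<Rightarrow> 'a) \<Rightarrow> ('a \<Rightarrow> 'a) set" where
  "adherence X T \<alpha> = {f \<in> envelope X T \<alpha>.
     \<forall>U. openin (ptwise_top X) U \<and> f \<in> U \<longrightarrow>
        (\<forall>s. \<exists>t\<in>T. t \<ge> s \<and> restrict (\<alpha> t) X \<in> U)}"

end

theory Submission
  imports Defs
begin

lemma closure_map_into:
  assumes "continuous_map P P \<phi>" "\<phi> ` S \<subseteq> D" "closedin P D"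
  shows "\<phi> ` (P closure_of S) \<subseteq> D"
proof -
  have "\<phi> ` (P closure_of S) \<subseteq> P closure_of (\<phi> ` S)"
    by (rule continuous_map_image_closure_subset[OF assms(1)])
  also have "\<dots> \<subseteq> P closure_of D" by (rule closure_of_mono[OF assms(2)])
  also have "\<dots> = D" using assms(3) by (simp add: closure_of_eq)
  finally show ?thesis .
qed

lemma topspace_ptwise: "topspace (ptwise_top X) = (\<Pi>\<^sub>E x\<in>X. X)"
  by (simp add: ptwise_top_def)

lemma ecomp_assoc:
  assumes "h \<in> (\<Pi>\<^sub>E x\<in>X. X)"
  shows "ecomp X f (ecomp X g h) = ecomp X (ecomp X f g) h"
  using assms by (auto simp: ecomp_def restrict_def fun_eq_iff PiE_def Pi_def)

lemma ecomp_top: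
  assumes "f \<in> (\<Pi>\<^sub>E x\<in>X. X)" "g \<in> (\<Pi>\<^sub>E x\<in>X. X)"
  shows "ecomp X f g \<in> (\<Pi>\<^sub>E x\<in>X. X)"
  using assms by (auto simp: ecomp_def PiE_def Pi_def)

lemma Rcont:
  assumes "f \<in> (\<Pi>\<^sub>E x\<in>X. X)"
  shows "continuous_map (ptwise_top X) (ptwise_top X) (\<lambda>g. ecomp X g f)"
  unfolding ptwise_top_def continuous_map_componentwise
proof (intro conjI ballI)
  show "(\<lambda>g. ecomp X g f) ` topspace (product_topology (\<lambda>_. top_of_set X) X) \<subseteq> extensional X"
    by (auto simp: ecomp_def)
  fix k assume k: "k \<in> X"
  have "continuous_map (product_topology (\<lambda>_. top_of_set X) X) (top_of_set X) (\<lambda>g. g (f k))"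
    using assms k by (intro continuous_map_product_projection) auto
  then show "continuous_map (product_topology (\<lambda>_. top_of_set X) X) (top_of_set X) (\<lambda>g. ecomp X g f k)"
    using k by (simp add: ecomp_def)
qed

lemma Lcont:
  assumes "continuous_on X h" "h ` X \<subseteq> X"
  shows "continuous_map (ptwise_top X) (ptwise_top X) (\<lambda>g. ecomp X (restrict h X) g)"
  unfolding ptwise_top_def continuous_map_componentwise
proof (intro conjI ballI)
  show "(\<lambda>g. ecomp X (restrict h X) g) ` topspace (product_topology (\<lambda>_. top_of_set X) X) \<subseteq> extensional X"
    by (auto simp: ecomp_def)
  fix k assume k: "k \<in> X"
  have c1: "continuous_map (product_topology (\<lambda>_. top_of_set X) X) (top_of_set X) (\<lambda>g. g k)"
    using k by (intro continuous_map_product_projection) auto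
  have c2: "continuous_map (top_of_set X) (top_of_set X) h"
    using assms by (intro continuous_map_into_subtopology) auto
  have "continuous_map (product_topology (\<lambda>_. top_of_set X) X) (top_of_set X) (\<lambda>g. h (g k))"
    using continuous_map_compose[OF c1 c2] by (simp add: o_def)
  then show "continuous_map (product_topology (\<lambda>_. top_of_set X) X) (top_of_set X) (\<lambda>g. ecomp X (restrict h X) g k)"
    by (rule continuous_map_eq) (use k in \<open>auto simp: ecomp_def PiE_def Pi_def\<close>)
qed

theorem lemma4p3:
  fixes X :: "'a::metric_space set" and T :: "real set" and \<alpha> :: "real \<Rightarrow> 'a \<Rightarrow> 'a"
  assumes "compact X"
    and "T = range real \<or> T = {0..}"
    and "\<And>t. t \<in> T \<Longrightarrow> continuous_on X (\<alpha> t)"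
    and "\<And>t. t \<in> T \<Longrightarrow> \<alpha> t ` X = X"
    and "\<And>x. x \<in> X \<Longrightarrow> \<alpha> 0 x = x"
    and "\<And>s t x. s \<in> T \<Longrightarrow> t \<in> T \<Longrightarrow> x \<in> X \<Longrightarrow> \<alpha> (s + t) x = \<alpha> s (\<alpha> t x)"
  shows "kernel X (envelope X T \<alpha>) \<subseteq> adherence X T \<alpha>"
proof -
  define P where "P = ptwise_top X"
  define r where "r t = restrict (\<alpha> t) X" for t
  define E where "E = envelope X T \<alpha>"
  define C where "C s = P closure_of (r ` {t\<in>T. s \<le> t})" for s
  have tp: "topspace P = (\<Pi>\<^sub>E x\<in>X. X)" by (simp add: P_def topspace_ptwise)
  have T0: "0 \<in> T" using assms(2) by (metis atLeast_iff order_refl of_nat_0 rangeI)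
  have Tpos: "0 \<le> t" if "t \<in> T" for t using assms(2) that by auto
  have Tadd: "t + u \<in> T" if "t \<in> T" "u \<in> T" for t u
    using assms(2) that by (auto, metis of_nat_add rangeI)
  have Tunb: "\<exists>t\<in>T. s \<le> t" for s
  proof -
    obtain n where "s \<le> real n" using real_arch_simple by blast
    then show ?thesis using assms(2) by (cases "T = range real") auto
  qed
  have rtop: "r t \<in> topspace P" if "t \<in> T" for t
    using assms(4)[OF that] by (auto simp: tp r_def)
  have cs: "compact_space P"
    unfolding P_def ptwise_top_def compact_space_product_topology
    using assms(1) by (auto intro: compact_space_subtopology)
  have hs: "Hausdorff_space P"
    unfolding P_def ptwise_top_def Hausdorff_space_product_topology
    by (auto intro: Hausdorff_space_subtopology)
  have C0: "C 0 = E"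
    using Tpos by (simp add: C_def E_def envelope_def P_def r_def) (metis (no_types, lifting) Collect_cong mem_Collect_eq Collect_mem_eq)
  have Edef: "E = P closure_of (r ` T)"
    by (simp add: E_def envelope_def P_def r_def[abs_def])
  have Ccl: "closedin P (C s)" for s by (simp add: C_def)
  have Cmono: "C s' \<subseteq> C s" if "s \<le> s'" for s s'
    unfolding C_def using that by (intro closure_of_mono) auto
  have Csub: "C s \<subseteq> topspace P" for s by (simp add: C_def closure_of_subset_topspace)
  have Esub: "E \<subseteq> topspace P" using C0 Csub by blast
  have rinC: "r t \<in> C s" if "t \<in> T" "s \<le> t" for s t
    unfolding C_def using that rtop by (intro closure_of_subset[THEN subsetD]) auto
  have rinE: "r t \<in> E" if "t \<in> T" for t using rinC[of t 0] Tpos that C0 by auto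
  have rr: "ecomp X (r t) (r u) = r (t + u)" if "t \<in> T" "u \<in> T" for t u
    using that assms(4)[OF that(2)] assms(6)[OF that]
    by (auto simp: ecomp_def r_def fun_eq_iff)
  have Lc: "continuous_map P P (\<lambda>g. ecomp X (r t) g)" if "t \<in> T" for t
    unfolding P_def r_def using assms(3,4)[OF that] by (intro Lcont) auto
  have Rc: "continuous_map P P (\<lambda>g. ecomp X g f)" if "f \<in> topspace P" for f
    unfolding P_def using that by (intro Rcont) (simp add: tp)
  have Key1: "ecomp X (r t) g \<in> C s" if "t \<in> T" "g \<in> C s" for t g s
  proof -
    have "(\<lambda>g. ecomp X (r t) g) ` (P closure_of (r ` {t\<in>T. s \<le> t})) \<subseteq> C s"
      by (rule closure_map_into[OF Lc[OF that(1)] _ Ccl])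
         (use that(1) Tpos[OF that(1)] in \<open>auto simp: rr intro!: rinC Tadd add_increasing\<close>)
    then show ?thesis using that(2) by (auto simp: C_def)
  qed
  have Key2: "ecomp X (r t) f \<in> C s" if "f \<in> E" "t \<in> T" "s \<le> t" for f t s
  proof -
    have "(\<lambda>g. ecomp X (r t) g) ` (P closure_of (r ` T)) \<subseteq> C s"
      by (rule closure_map_into[OF Lc[OF that(2)] _ Ccl])
         (use that Tpos in \<open>auto simp: rr intro!: rinC Tadd add_increasing2\<close>)
    then show ?thesis using that(1) by (auto simp: Edef)
  qed
  have Id1: "ecomp X g f \<in> C s" if "f \<in> E" "g \<in> C s" for f g s
  proof -
    have "(\<lambda>g. ecomp X g f) ` (P closure_of (r ` {t\<in>T. s \<le> t})) \<subseteq> C s"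
      by (rule closure_map_into[OF Rc _ Ccl]) (use that Esub Key2 in auto)
    then show ?thesis using that(2) by (auto simp: C_def)
  qed
  have Id2: "ecomp X f g \<in> C s" if "f \<in> E" "g \<in> C s" for f g s
  proof -
    have "(\<lambda>f. ecomp X f g) ` (P closure_of (r ` T)) \<subseteq> C s"
      by (rule closure_map_into[OF Rc _ Ccl]) (use that Csub Key1 in auto)
    then show ?thesis using that(1) by (auto simp: Edef)
  qed
  have Emul: "ecomp X f g \<in> E" if "f \<in> E" "g \<in> E" for f g
    using Id2[of f g 0] that C0 by auto
  have Ecl: "closedin P E" by (simp add: E_def envelope_def P_def)
  have Ene: "E \<noteq> {}" using rinE T0 by blast
  have Ad: "adherence X T \<alpha> = {f. \<forall>s. f \<in> C s}"
  proof (intro set_eqI iffI)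
    fix f assume f: "f \<in> adherence X T \<alpha>"
    show "f \<in> {f. \<forall>s. f \<in> C s}"
    proof (safe)
      fix s
      have "f \<in> topspace P" using f Esub by (auto simp: adherence_def E_def)
      then show "f \<in> C s" using f unfolding C_def in_closure_of adherence_def P_def r_def
        by blast
    qed
  next
    fix f assume f: "f \<in> {f. \<forall>s. f \<in> C s}"
    then have "f \<in> E" using C0 by auto
    moreover have "\<exists>t\<in>T. t \<ge> s \<and> r t \<in> U" if "openin P U" "f \<in> U" for U s
      using f[simplified, rule_format, of s] that unfolding C_def in_closure_of by blast
    ultimately show "f \<in> adherence X T \<alpha>"
      unfolding adherence_def E_def P_def r_def by blast
  qed
  have Adne: "adherence X T \<alpha> \<noteq> {}"
  proof -
    have "(\<Inter>n. C (real n)) \<noteq> {}"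
      by (rule compact_space_imp_nest[OF cs Ccl])
         (use Tunb rinC in \<open>blast\<close>, auto simp: decseq_def intro!: Cmono)
    then obtain f where "\<forall>n. f \<in> C (real n)" by blast
    then have "f \<in> C s" for s
      using real_arch_simple[of s] Cmono by blast
    then show ?thesis using Ad by auto
  qed
  have AdI: "is_ideal X E (adherence X T \<alpha>)"
    unfolding is_ideal_def using Adne Ad C0 Id1 Id2 by auto
  define LL where "LL = {L. closedin P L \<and> L \<noteq> {} \<and> L \<subseteq> E \<and> (\<forall>f\<in>E. \<forall>g\<in>L. ecomp X f g \<in> L)}"
  have "E \<in> LL" using Ecl Ene Emul by (auto simp: LL_def)
  obtain M where M: "M \<in> (\<lambda>L. topspace P - L) ` LL"
    and Mmax: "\<And>K. K \<in> (\<lambda>L. topspace P - L) ` LL \<Longrightarrow> M \<subseteq> K \<Longrightarrow> K = M"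
  proof -
    have "\<exists>M\<in>(\<lambda>L. topspace P - L) ` LL. \<forall>K\<in>(\<lambda>L. topspace P - L) ` LL. M \<subseteq> K \<longrightarrow> K = M"
    proof (rule subset_Zorn_nonempty)
      show "(\<lambda>L. topspace P - L) ` LL \<noteq> {}" using \<open>E \<in> LL\<close> by blast
    next
      fix CC assume CCne: "CC \<noteq> {}" and ch: "subset.chain ((\<lambda>L. topspace P - L) ` LL) CC"
      define DD where "DD = (\<lambda>K. topspace P - K) ` CC"
      have CCsub: "CC \<subseteq> (\<lambda>L. topspace P - L) ` LL" using ch by (simp add: subset_chain_def)
      have LLsub: "L \<subseteq> topspace P" if "L \<in> LL" for L
        using that closedin_subset by (auto simp: LL_def)
      have DDLL: "DD \<subseteq> LL"
      proof
        fix D assume "D \<in> DD"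
        then obtain L where "L \<in> LL" "D = topspace P - (topspace P - L)"
          using CCsub unfolding DD_def by blast
        then show "D \<in> LL" using LLsub by (simp add: Diff_Diff_Int Int_absorb1)
      qed
      have DDch: "subset.chain LL DD"
        unfolding subset_chain_def
      proof (intro conjI DDLL ballI)
        fix A B assume "A \<in> DD" "B \<in> DD"
        then obtain A' B' where "A' \<in> CC" "B' \<in> CC" "A = topspace P - A'" "B = topspace P - B'"
          unfolding DD_def by blast
        moreover have "A' \<subseteq> B' \<or> B' \<subseteq> A'" using ch \<open>A' \<in> CC\<close> \<open>B' \<in> CC\<close>
          by (simp add: subset_chain_def)
        ultimately show "A \<subseteq> B \<or> B \<subseteq> A" by blast
      qed
      have DDne: "DD \<noteq> {}" using CCne by (simp add: DD_def)
      have "\<Inter>DD \<noteq> {}"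
      proof (rule cs[unfolded compact_space_fip, rule_format, of DD], intro conjI allI impI ballI)
        fix D assume "D \<in> DD" then show "closedin P D" using DDLL by (auto simp: LL_def)
      next
        fix F assume F: "finite F \<and> F \<subseteq> DD"
        show "\<Inter>F \<noteq> {}"
        proof (cases "F = {}")
          case False
          have "subset.chain LL F" using DDch F by (auto simp: subset_chain_def)
          then have "\<Inter>F \<in> F" using Inter_in_chain F False by blast
          then show ?thesis using F DDLL by (auto simp: LL_def)
        qed simp
      qed
      have InLL: "\<Inter>DD \<in> LL"
        unfolding LL_def
      proof (intro CollectI conjI)
        show "closedin P (\<Inter>DD)" using DDne DDLL by (intro closedin_Inter) (auto simp: LL_def)
        show "\<Inter>DD \<noteq> {}" by fact
        show "\<Inter>DD \<subseteq> E" using DDne DDLL by (auto simp: LL_def)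
        show "\<forall>f\<in>E. \<forall>g\<in>\<Inter>DD. ecomp X f g \<in> \<Inter>DD" using DDLL by (auto simp: LL_def)
      qed
      have CCtp: "\<And>K. K \<in> CC \<Longrightarrow> K \<subseteq> topspace P" using CCsub by blast
      have "\<Union>CC = topspace P - \<Inter>DD"
      proof (intro set_eqI iffI)
        fix x assume "x \<in> \<Union>CC"
        then obtain K where K: "K \<in> CC" "x \<in> K" by blast
        then have "x \<in> topspace P" using CCtp by blast
        moreover have "x \<notin> topspace P - K" using K by blast
        ultimately show "x \<in> topspace P - \<Inter>DD" using K unfolding DD_def by blast
      next
        fix x assume x: "x \<in> topspace P - \<Inter>DD"
        then obtain K where "K \<in> CC" "x \<notin> topspace P - K" unfolding DD_def by blast
        then show "x \<in> \<Union>CC" using x by blast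
      qed
      then show "\<Union>CC \<in> (\<lambda>L. topspace P - L) ` LL" using InLL by blast
    qed
    then show ?thesis using that by blast
  qed
  then obtain L0 where L0: "L0 \<in> LL" and ML0: "M = topspace P - L0" by blast
  have L0sub: "L0 \<subseteq> topspace P" using L0 closedin_subset by (auto simp: LL_def)
  have L0min: "L = L0" if "L \<in> LL" "L \<subseteq> L0" for L
  proof -
    have "L \<subseteq> topspace P" using that closedin_subset by (auto simp: LL_def)
    have i1: "topspace P - L \<in> (\<lambda>L. topspace P - L) ` LL" using that(1) by (rule imageI)
    have i2: "M \<subseteq> topspace P - L" using ML0 that(2) by blast
    have "topspace P - L = topspace P - L0" using Mmax[OF i1 i2] ML0 by simp
    then have "topspace P - (topspace P - L) = topspace P - (topspace P - L0)" by simp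
    then show ?thesis using \<open>L \<subseteq> topspace P\<close> L0sub by (simp add: double_diff)
  qed
  have L0E: "L0 \<subseteq> E" and L0left: "\<And>f g. f \<in> E \<Longrightarrow> g \<in> L0 \<Longrightarrow> ecomp X f g \<in> L0"
    and L0ne: "L0 \<noteq> {}"
    using L0 by (auto simp: LL_def)
  have L0J: "L0 \<subseteq> J" if J: "is_ideal X E J" for J
  proof -
    obtain j where j: "j \<in> J" using J by (auto simp: is_ideal_def)
    obtain l where l: "l \<in> L0" using L0ne by blast
    define h where "h = ecomp X j l"
    have jE: "j \<in> E" using J j by (auto simp: is_ideal_def)
    have hJ: "h \<in> J" using J j l L0E by (auto simp: is_ideal_def h_def)
    have hL: "h \<in> L0" using L0left jE l by (simp add: h_def)
    have hE: "h \<in> E" using hL L0E by auto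
    have htop: "h \<in> (\<Pi>\<^sub>E x\<in>X. X)" using hE Esub tp by auto
    define Eh where "Eh = (\<lambda>g. ecomp X g h) ` E"
    have "Eh \<in> LL"
      unfolding LL_def
    proof (intro CollectI conjI)
      have "compactin P Eh" unfolding Eh_def
        by (rule image_compactin[OF closedin_compact_space[OF cs Ecl] Rc]) (use htop tp in auto)
      then show "closedin P Eh" using hs compactin_imp_closedin by blast
      show "Eh \<noteq> {}" using Ene by (simp add: Eh_def)
      show "Eh \<subseteq> E" using Emul hE by (auto simp: Eh_def)
      show "\<forall>f\<in>E. \<forall>g\<in>Eh. ecomp X f g \<in> Eh"
        using Emul ecomp_assoc[OF htop] unfolding Eh_def by auto
    qed
    moreover have "Eh \<subseteq> L0" using L0left hL by (auto simp: Eh_def)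
    ultimately have "Eh = L0" using L0min by blast
    moreover have "Eh \<subseteq> J" using J hJ by (auto simp: Eh_def is_ideal_def)
    ultimately show ?thesis by blast
  qed
  define K where "K = {ecomp X l g | l g. l \<in> L0 \<and> g \<in> E}"
  have KI: "is_ideal X E K"
    unfolding is_ideal_def
  proof (intro conjI ballI)
    show "K \<subseteq> E" using L0E Emul by (auto simp: K_def)
    show "K \<noteq> {}" using L0ne Ene by (auto simp: K_def)
    fix f g assume f: "f \<in> E" and g: "g \<in> K"
    then obtain l k where lk: "l \<in> L0" "k \<in> E" "g = ecomp X l k" by (auto simp: K_def)
    have ktop: "k \<in> (\<Pi>\<^sub>E x\<in>X. X)" using lk Esub tp by auto
    have ftop: "f \<in> (\<Pi>\<^sub>E x\<in>X. X)" using f Esub tp by auto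
    show "ecomp X f g \<in> K"
      using lk L0left[OF f lk(1)] ecomp_assoc[OF ktop, of f l] unfolding K_def by auto
    show "ecomp X g f \<in> K"
      using lk Emul[OF lk(2) f] ecomp_assoc[OF ftop, of l k] unfolding K_def by (metis (mono_tags, lifting) mem_Collect_eq)
  qed
  have KJ: "K \<subseteq> J" if "is_ideal X E J" for J
    using L0J[OF that] that by (auto simp: K_def is_ideal_def)
  have "kernel X E = K"
    unfolding kernel_def
  proof (rule the_equality)
    show "is_minimal_ideal X E K" using KI KJ by (auto simp: is_minimal_ideal_def)
    fix I assume "is_minimal_ideal X E I"
    then have "is_ideal X E I" "\<And>J. is_ideal X E J \<Longrightarrow> J \<subseteq> I \<Longrightarrow> J = I"
      by (auto simp: is_minimal_ideal_def)
    then show "I = K" using KI KJ by metis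
  qed
  then show ?thesis using KJ[OF AdI] by (simp add: E_def)
qed

end
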